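(* Let $c\in C$ and $t\in\mathbb{Z}^+$ with $t\ge 2$. Suppose Assumption 1 (Instantaneous Exponential Growth): $\mathbb{E}[\ln(I^t_{s,c})\mid s,X_{t,c}]=\alpha(X_{t,c})+r(X_{t,c})s+\mathbb{E}[\varepsilon_{t,c}\mid X_{t,c}]$, and Assumption 2 (Overlap): $\mathbb{E}[\ln(I^t_{s,c})\mid s=t-1,X_{t,c}]=\mathbb{E}[\ln(I^{t-1}_{s,c})\mid s=t-1,X_{t-1,c}]$ hold. Then the county-level instantaneous exponential growth rate is identified as $$r_{t,c}=\mathbb{E}[\ln(I^t_{s,c})\mid s=t,X_{t,c}]-\mathbb{E}[\ln(I^{t-1}_{s,c})\mid s=t-1,X_{t-1,c}].$$
   Context: Let $C$ be a finite set of counties and $\mathbb{Z}^+=\{1,2,3,\dots\}$ the set of days. For county $c$ and day $s$, $I_{s,c}>0$ is the observed incident case number and $X_{s,c}$ a (random) feature vector; $\alpha(\cdot)$, $r(\cdot)$ are functions of the features. Actual growth model: $\ln(I_{s,c})=\alpha(X_{s,c})+r(X_{s,c})s+\varepsilon_{s,c}$. For each $t\in\mathbb{Z}^+$, potential growth model: $\ln(I^t_{s,c})=\alpha(X_{t,c})+r(X_{t,c})s+\varepsilon_{t,c}$, where $I^t_{s,c}$ is the potential incident case number of county $c$ on day $s$ if spread followed the day-$t$ pattern, with $I^s_{s,c}=I_{s,c}$ observed. The day $s$ is a random variable. The instantaneous county-level exponential growth rate is $r_{t,c}:=\mathbb{E}[\ln(I^t_{s,c}/I^t_{s-1,c})\mid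 X_{t,c}]$. *)

theory Defs
  imports "HOL-Probability.Probability"
begin

text \<open>Regression-function version of a conditional expectation:
  cond_exp_fun M N Z Y g  means  g(z) = E[Y | Z = z], i.e. the random variable
  g(Z) is (almost everywhere) the conditional expectation of Y given the
  sigma-algebra generated by Z (library notion real_cond_exp).\<close>
definition cond_exp_fun ::
  "'w measure \<Rightarrow> 'z measure \<Rightarrow> ('w \<Rightarrow> 'z) \<Rightarrow> ('w \<Rightarrow> real) \<Rightarrow> ('z \<Rightarrow> real) \<Rightarrow> bool" where
  "cond_exp_fun M N Z Y g \<longleftrightarrow>
     Z \<in> measurable M N \<and> g \<in> borel_measurable N \<and> integrable M Y \<and>
     (AE \<omega> in M. g (Z \<omega>) = real_cond_exp M (vimage_algebra (space M) Z N) Y \<omega>)"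

end

theory Submission
  imports Defs
begin

lemma ce_self:
  assumes P: "prob_space M" and ce: "cond_exp_fun M N Z Y g"
    and eq: "\<forall>\<omega>\<in>space M. Y \<omega> = h (Z \<omega>)" and hm: "h \<in> borel_measurable N"
  shows "AE \<omega> in M. g (Z \<omega>) = h (Z \<omega>)"
proof -
  have all: "Z \<in> measurable M N \<and> h \<in> borel_measurable N \<and> integrable M Y \<and>
     (AE \<omega> in M. g (Z \<omega>) = real_cond_exp M (vimage_algebra (space M) Z N) Y \<omega>)"
    using ce hm unfolding cond_exp_fun_def by blast
  note Zm = all[THEN conjunct1] and int = all[THEN conjunct2, THEN conjunct2, THEN conjunct1]
    and ae = all[THEN conjunct2, THEN conjunct2, THEN conjunct2]
  let ?F = "vimage_algebra (space M) Z N"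
  have Zsp: "Z \<in> space M \<rightarrow> space N" using measurable_space[OF Zm] by (rule Pi_I)
  have sub: "subalgebra M ?F"
    unfolding subalgebra_def
  proof (intro conjI subsetI)
    fix x assume x: "x \<in> sets ?F"
    from Zsp obtain A where "A \<in> sets N" "x = Z -` A \<inter> space M"
      using x by (auto simp: sets_vimage_algebra2)
    then show "x \<in> sets M" using measurable_sets[OF Zm \<open>A \<in> sets N\<close>] by simp
  qed simp
  have fm: "finite_measure M" using P by (simp add: prob_space_def)
  have "finite_measure_subalgebra M ?F"
    by (rule finite_measure_subalgebra.intro[OF fm finite_measure_subalgebra_axioms.intro[OF sub]])
  then have sfs: "sigma_finite_subalgebra M ?F"
    by (rule finite_measure_subalgebra_is_sigma_finite)
  have Z1: "Z \<in> measurable ?F N"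
    by (rule measurable_vimage_algebra1) (rule Zsp)
  have "(\<lambda>\<omega>. h (Z \<omega>)) \<in> borel_measurable ?F"
    using measurable_comp[OF Z1 hm] by (simp add: comp_def)
  moreover have "Y \<in> borel_measurable ?F \<longleftrightarrow> (\<lambda>\<omega>. h (Z \<omega>)) \<in> borel_measurable ?F"
    by (rule measurable_cong) (simp add: eq)
  ultimately have "Y \<in> borel_measurable ?F" by simp
  then have "AE \<omega> in M. real_cond_exp M ?F Y \<omega> = Y \<omega>"
    by (rule sigma_finite_subalgebra.real_cond_exp_F_meas[OF sfs int])
  with ae AE_space show ?thesis
  proof eventually_elim
    case (elim \<omega>)
    then have "Y \<omega> = h (Z \<omega>)" using eq by blast
    with elim show ?case by simp
  qed
qed

theorem theorem1:
  fixes M :: "'w measure" and MX :: "'x measure"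
    and C :: "'c set" and c :: 'c and t :: nat
    and s :: "'w \<Rightarrow> nat"
    and X :: "nat \<Rightarrow> 'c \<Rightarrow> 'w \<Rightarrow> 'x"
    and eps :: "nat \<Rightarrow> 'c \<Rightarrow> 'w \<Rightarrow> real"
    and \<alpha> r :: "'x \<Rightarrow> real"
    and Iobs :: "nat \<Rightarrow> 'c \<Rightarrow> 'w \<Rightarrow> real"
    and Ipot :: "nat \<Rightarrow> nat \<Rightarrow> 'c \<Rightarrow> 'w \<Rightarrow> real"
    and rate :: "'x \<Rightarrow> real" and e :: "'x \<Rightarrow> real"
    and m1 m2 :: "nat \<times> 'x \<Rightarrow> real"
  assumes M: "prob_space M"
    and C: "finite C" and c: "c \<in> C" and t: "t \<ge> 2"
    and s_meas: "s \<in> measurable M (count_space UNIV)"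
    and s_pos: "\<forall>\<omega>\<in>space M. s \<omega> \<ge> 1"
    and X_meas: "\<forall>d cc. X d cc \<in> measurable M MX"
    and eps_meas: "\<forall>d cc. eps d cc \<in> borel_measurable M"
    and \<alpha>_meas: "\<alpha> \<in> borel_measurable MX" and r_meas: "r \<in> borel_measurable MX"
    and Iobs_pos: "\<forall>d\<ge>1. \<forall>cc\<in>C. \<forall>\<omega>\<in>space M. Iobs d cc \<omega> > 0"
    and actual_model: "\<forall>d\<ge>1. \<forall>cc\<in>C. \<forall>\<omega>\<in>space M.
          ln (Iobs d cc \<omega>) = \<alpha> (X d cc \<omega>) + r (X d cc \<omega>) * real d + eps d cc \<omega>"
    and Ipot_pos: "\<forall>tt\<ge>1. \<forall>d. \<forall>cc\<in>C. \<forall>\<omega>\<in>space M. Ipot tt d cc \<omega> > 0"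
    and potential_model: "\<forall>tt\<ge>1. \<forall>d. \<forall>cc\<in>C. \<forall>\<omega>\<in>space M.
          ln (Ipot tt d cc \<omega>) = \<alpha> (X tt cc \<omega>) + r (X tt cc \<omega>) * real d + eps tt cc \<omega>"
    and consistency: "\<forall>d\<ge>1. \<forall>cc\<in>C. \<forall>\<omega>\<in>space M. Ipot d d cc \<omega> = Iobs d cc \<omega>"
    and rate_def: "cond_exp_fun M MX (X t c)
          (\<lambda>\<omega>. ln (Ipot t (s \<omega>) c \<omega> / Ipot t (s \<omega> - 1) c \<omega>)) rate"
    and m1: "cond_exp_fun M (count_space UNIV \<Otimes>\<^sub>M MX) (\<lambda>\<omega>. (s \<omega>, X t c \<omega>))
          (\<lambda>\<omega>. ln (Ipot t (s \<omega>) c \<omega>)) m1"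
    and e: "cond_exp_fun M MX (X t c) (eps t c) e"
    and assumption1: "\<forall>k\<ge>1. \<forall>x\<in>space MX. m1 (k, x) = \<alpha> x + r x * real k + e x"
    and m2: "cond_exp_fun M (count_space UNIV \<Otimes>\<^sub>M MX) (\<lambda>\<omega>. (s \<omega>, X (t - 1) c \<omega>))
          (\<lambda>\<omega>. ln (Ipot (t - 1) (s \<omega>) c \<omega>)) m2"
    and assumption2: "AE \<omega> in M. m1 (t - 1, X t c \<omega>) = m2 (t - 1, X (t - 1) c \<omega>)"
  shows "AE \<omega> in M. rate (X t c \<omega>) = m1 (t, X t c \<omega>) - m2 (t - 1, X (t - 1) c \<omega>)"
proof -
  have t1: "t \<ge> 1" using t by simp
  have eq: "\<forall>\<omega>\<in>space M. ln (Ipot t (s \<omega>) c \<omega> / Ipot t (s \<omega> - 1) c \<omega>) = r (X t c \<omega>)"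
  proof
    fix \<omega> assume w: "\<omega> \<in> space M"
    have p1: "Ipot t (s \<omega>) c \<omega> > 0" and p2: "Ipot t (s \<omega> - 1) c \<omega> > 0"
      using Ipot_pos t1 c w by auto
    have "ln (Ipot t (s \<omega>) c \<omega> / Ipot t (s \<omega> - 1) c \<omega>)
        = ln (Ipot t (s \<omega>) c \<omega>) - ln (Ipot t (s \<omega> - 1) c \<omega>)"
      using p1 p2 by (simp add: ln_div)
    also have "\<dots> = r (X t c \<omega>) * (real (s \<omega>) - real (s \<omega> - 1))"
      using potential_model t1 c w by (simp add: algebra_simps)
    also have "real (s \<omega>) - real (s \<omega> - 1) = 1" using s_pos w by (simp add: of_nat_diff)
    finally show "ln (Ipot t (s \<omega>) c \<omega> / Ipot t (s \<omega> - 1) c \<omega>) = r (X t c \<omega>)" by simp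
  qed
  have A: "AE \<omega> in M. rate (X t c \<omega>) = r (X t c \<omega>)"
    by (rule ce_self[OF M rate_def eq r_meas])
  have Xs: "\<forall>\<omega>\<in>space M. X t c \<omega> \<in> space MX"
    using measurable_space[OF X_meas[rule_format]] by blast
  show ?thesis
    using A assumption2 AE_space
  proof eventually_elim
    case (elim \<omega>)
    have x: "X t c \<omega> \<in> space MX" using Xs elim by blast
    have "m1 (t, X t c \<omega>) = \<alpha> (X t c \<omega>) + r (X t c \<omega>) * real t + e (X t c \<omega>)"
      using assumption1 x t1 by blast
    moreover have "m1 (t - 1, X t c \<omega>) = \<alpha> (X t c \<omega>) + r (X t c \<omega>) * real (t - 1) + e (X t c \<omega>)"
    proof -
      have "t - 1 \<ge> 1" using t by simp
      then show ?thesis using assumption1 x by blast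
    qed
    moreover have "r (X t c \<omega>) * real (t - 1) = r (X t c \<omega>) * real t - r (X t c \<omega>)"
      using t1 by (simp add: of_nat_diff right_diff_distrib)
    ultimately show ?case
      using elim(1,2) by linarith
  qed
qed

end
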